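(* Let $a\in\mathbb{R}$, $\alpha\in(0,1]$, $\sigma_r^2,\sigma_w^2\ge0$. For a symmetric doubly stochastic $N\times N$ matrix $P$ with eigenvalues $\lambda_1(P),\dots,\lambda_N(P)$ such that $Q=a(P-\alpha I_N)$ has spectral radius $<1$, set $$\hat{\mathrm{MSD}}(P,\alpha)=R_{MSD}(\alpha)+\frac1N\sum_{i=1}^N\frac{a^2\alpha^2\sigma_w^2}{1-a^2(\lambda_i(P)-\alpha)^2},\quad \tilde{\mathrm{MSD}}(P,\alpha)=R_{MSD}(\alpha)+\frac1N\sum_{i=1}^N\frac{a^2\alpha^2\sigma_w^2\lambda_i^2(P)}{1-a^2(\lambda_i(P)-\alpha)^2},$$ with $R_{MSD}(\alpha)=\sigma_r^2/(1-a^2(1-\alpha)^2)$ (these are the steady-state mean square deviations of the two estimators $\hat{x}_{i,t+1}=a(\sum_j p_{ij}\hat{x}_{j,t}+\alpha(y_{i,t}-\hat{x}_{i,t}))$ and $\tilde{x}_{i,t+1}=a(\sum_jp_{ij}\tilde{x}_{j,t}+\alpha(\sum_jp_{ij}y_{j,t}-\tilde{x}_{i,t}))$ for the model $x_{t+1}=ax_t+r_t$, $y_{i,t}=x_t+w_{i,t}$ with innovation variance $\sigma_r^2$ and observation noise variance $\sigma_w^2$). Let $L_{K_N}$, $L_{S_N}$, $L_{C_N}$ be the Laplacians of the complete graph, the star graph and the cycle graph on $N$ vertices. Then: (a) If $|a|(1-\alpha)<1$ and $P=I-\frac{1-\alpha}{N}L_{K_N}$, then $\lim_{N\to\infty}\hat{\mathrm{MSD}}(P,\alpha)=R_{MSD}(\alpha)+a^2\alpha^2\sigma_w^2$.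 (b) If $|a|(1-\alpha)<1$ and $P=I-\frac{1-\alpha}{N}L_{S_N}$, then $\lim_{N\to\infty}\hat{\mathrm{MSD}}(P,\alpha)=R_{MSD}(\alpha)+\dfrac{a^2\alpha^2\sigma_w^2}{1-a^2(1-\alpha)^2}$. (c) If $\beta\in(0,1/2)$ is a constant with $|a|\max\{1-\alpha,|1-4\beta-\alpha|\}<1$ and $P=I-\beta L_{C_N}$, then $$\lim_{N\to\infty}\hat{\mathrm{MSD}}(P,\alpha)=R_{MSD}(\alpha)+\int_0^{2\pi}\frac{a^2\alpha^2\sigma_w^2}{1-a^2\big(1-\beta(2-2\cos\tau)-\alpha\big)^2}\,\frac{d\tau}{2\pi}.$$ (d) If $|a|\max\{1-\alpha,\alpha\}<1$ and $P=I-\frac1NL_{K_N}$, then $\lim_{N\to\infty}\tilde{\mathrm{MSD}}(P,\alpha)=R_{MSD}(\alpha)$.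
   Context: The Laplacian of a graph is $L=D-A$ with $D$ the degree matrix and $A$ the adjacency matrix. The spectral radius conditions in each part are the requirement (for every $N$) that $\rho(a(P-\alpha I_N))<1$, under which the steady-state MSD is given by the displayed formulas. *)

theory Defs
  imports "HOL-Analysis.Analysis" "HOL-Library.Multiset"
    "Jordan_Normal_Form.Char_Poly" "Jordan_Normal_Form.Spectral_Radius"
begin

definition laplacian :: "nat \<Rightarrow> (nat \<Rightarrow> nat \<Rightarrow> bool) \<Rightarrow> real mat" where
  "laplacian N adj = mat N N (\<lambda>(i,j).
     (if i = j then real (card {k. k < N \<and> adj i k}) else 0) - (if adj i j then 1 else 0))"

definition complete_adj :: "nat \<Rightarrow> nat \<Rightarrow> nat \<Rightarrow> bool" where
  "complete_adj N i j \<longleftrightarrow> i \<noteq> j"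

definition star_adj :: "nat \<Rightarrow> nat \<Rightarrow> nat \<Rightarrow> bool" where
  "star_adj N i j \<longleftrightarrow> i \<noteq> j \<and> (i = 0 \<or> j = 0)"

definition cycle_adj :: "nat \<Rightarrow> nat \<Rightarrow> nat \<Rightarrow> bool" where
  "cycle_adj N i j \<longleftrightarrow> i \<noteq> j \<and> (j = (i + 1) mod N \<or> i = (j + 1) mod N)"

abbreviation L_K :: "nat \<Rightarrow> real mat" where "L_K N \<equiv> laplacian N (complete_adj N)"
abbreviation L_S :: "nat \<Rightarrow> real mat" where "L_S N \<equiv> laplacian N (star_adj N)"
abbreviation L_C :: "nat \<Rightarrow> real mat" where "L_C N \<equiv> laplacian N (cycle_adj N)"

text \<open>The eigenvalues (with multiplicity) of a real matrix whose characteristic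
  polynomial splits over the reals (e.g. a real symmetric matrix), as a multiset.\<close>
definition eigvals :: "real mat \<Rightarrow> real multiset" where
  "eigvals A = (SOME M. char_poly A = (\<Prod>x\<in>#M. [:- x, 1:]))"

definition R_MSD :: "real \<Rightarrow> real \<Rightarrow> real \<Rightarrow> real" where
  "R_MSD a \<alpha> \<sigma>r2 = \<sigma>r2 / (1 - a^2 * (1 - \<alpha>)^2)"

definition MSD_hat :: "real \<Rightarrow> real \<Rightarrow> real \<Rightarrow> real \<Rightarrow> real mat \<Rightarrow> real" where
  "MSD_hat a \<alpha> \<sigma>r2 \<sigma>w2 P = R_MSD a \<alpha> \<sigma>r2 +
     (1 / real (dim_row P)) * (\<Sum>e\<in>#eigvals P. a^2 * \<alpha>^2 * \<sigma>w2 / (1 - a^2 * (e - \<alpha>)^2))"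

definition MSD_tilde :: "real \<Rightarrow> real \<Rightarrow> real \<Rightarrow> real \<Rightarrow> real mat \<Rightarrow> real" where
  "MSD_tilde a \<alpha> \<sigma>r2 \<sigma>w2 P = R_MSD a \<alpha> \<sigma>r2 +
     (1 / real (dim_row P)) * (\<Sum>e\<in>#eigvals P. a^2 * \<alpha>^2 * \<sigma>w2 * e^2 / (1 - a^2 * (e - \<alpha>)^2))"

end

theory Submission imports Defs begin

definition mtr :: "'a::comm_ring_1 mat \<Rightarrow> 'a" where
  "mtr A = (\<Sum>i<dim_row A. A $$ (i,i))"

lemma mtr_comm:
  fixes X Y :: "'a::comm_ring_1 mat"
  assumes "X \<in> carrier_mat n m" "Y \<in> carrier_mat m n"
  shows "mtr (X * Y) = mtr (Y * X)"
proof -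
  have "mtr (X * Y) = (\<Sum>i<n. \<Sum>k<m. X $$ (i,k) * Y $$ (k,i))"
    using assms by (simp add: mtr_def scalar_prod_def atLeast0LessThan)
  also have "\<dots> = (\<Sum>k<m. \<Sum>i<n. Y $$ (k,i) * X $$ (i,k))"
    by (subst sum.swap) (simp add: mult.commute)
  also have "\<dots> = mtr (Y * X)"
    using assms by (simp add: mtr_def scalar_prod_def atLeast0LessThan)
  finally show ?thesis .
qed

lemma core_entry:
  fixes A S S' :: "'a::field mat"
  assumes A: "A \<in> carrier_mat n n" and S: "S \<in> carrier_mat n n" and S': "S' \<in> carrier_mat n n"
    and SS: "S' * S = 1\<^sub>m n" and j: "j < n" and ev: "A *\<^sub>v col S j = d \<cdot>\<^sub>v col S j" and i: "i < n"
  shows "(S' * A * S) $$ (i,j) = (if i = j then d else 0)"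
proof -
  have "col (S' * A * S) j = (S' * A) *\<^sub>v col S j" by (rule col_mult2) (use j S S' A in auto)
  also have "\<dots> = S' *\<^sub>v (A *\<^sub>v col S j)" using j S S' A by (simp add: assoc_mult_mat_vec)
  also have "\<dots> = d \<cdot>\<^sub>v (S' *\<^sub>v col S j)" unfolding ev using S S' j by (simp add: mult_mat_vec)
  also have "S' *\<^sub>v col S j = col (S' * S) j" by (rule col_mult2[symmetric]) (use j S S' in auto)
  also have "\<dots> = unit_vec n j" using SS j by simp
  finally have "col (S' * A * S) j = d \<cdot>\<^sub>v unit_vec n j" .
  then have "col (S' * A * S) j $ i = (d \<cdot>\<^sub>v unit_vec n j) $ i" by simp
  then show ?thesis using i j S S' A by (simp add: unit_vec_def)
qed

lemma sim_char:
  fixes A S :: "'a::field mat"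
  assumes A: "A \<in> carrier_mat n n" and S: "S \<in> carrier_mat n n" and dS: "det S \<noteq> 0"
  obtains S' where "S' \<in> carrier_mat n n" "S' * S = 1\<^sub>m n" "S * S' = 1\<^sub>m n"
     "char_poly A = char_poly (S' * A * S)"
proof -
  from det_non_zero_imp_unit[OF S dS, unfolded Units_def, of "()"]
  obtain S' where S': "S' \<in> carrier_mat n n" and SS: "S' * S = 1\<^sub>m n" and SS2: "S * S' = 1\<^sub>m n"
    by (auto simp: ring_mat_def)
  have "A = S * (S' * A * S) * S'"
  proof -
    have "S * (S' * A * S) * S' = (S * S') * A * (S * S')"
      using S S' A by (simp add: assoc_mult_mat[of _ n n _ n _ n])
    also have "\<dots> = A" using SS2 A by simp
    finally show ?thesis by simp
  qed
  then have "similar_mat A (S' * A * S)"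
    by (intro similar_matI[of _ _ S S' n]) (use S S' A SS SS2 in auto)
  from char_poly_similar[OF this] S' SS SS2 that show ?thesis by blast
qed

lemma char_poly_eigbasis:
  fixes A S :: "'a::field mat"
  assumes A: "A \<in> carrier_mat n n" and S: "S \<in> carrier_mat n n" and dS: "det S \<noteq> 0"
    and ev: "\<And>j. j < m \<Longrightarrow> A *\<^sub>v col S j = d j \<cdot>\<^sub>v col S j" and m: "m \<le> n" and m1: "n - 1 \<le> m"
  obtains T where "T \<in> carrier_mat n n" "char_poly A = (\<Prod>i<n. [:- T $$ (i,i), 1:])"
    "\<And>i. i < m \<Longrightarrow> T $$ (i,i) = d i" "mtr T = mtr A"
proof -
  obtain S' where S': "S' \<in> carrier_mat n n" and SS: "S' * S = 1\<^sub>m n" and SS2: "S * S' = 1\<^sub>m n"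
     and cp: "char_poly A = char_poly (S' * A * S)"
    using sim_char[OF A S dS] by blast
  define T where "T = S' * A * S"
  have T: "T \<in> carrier_mat n n" using S S' A by (simp add: T_def)
  have ent: "T $$ (i,j) = (if i = j then d j else 0)" if "j < m" "i < n" for i j
    unfolding T_def using core_entry[OF A S S' SS _ ev, of j i] that m by simp
  have ut: "upper_triangular T"
    unfolding upper_triangular_def
  proof (intro allI impI)
    fix i j assume "i < dim_row T" "j < i"
    show "T $$ (i,j) = 0"
    proof (cases "j < m")
      case True then show ?thesis using ent[of j i] \<open>i < dim_row T\<close> \<open>j < i\<close> T by auto
    next
      case False
      then show ?thesis using \<open>i < dim_row T\<close> \<open>j < i\<close> T m1 by auto
    qed
  qed
  have "char_poly A = char_poly T" using cp T_def by simp
  also have "\<dots> = (\<Prod>a\<leftarrow>diag_mat T. [:- a, 1:])" by (rule char_poly_upper_triangular[OF T ut])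
  also have "\<dots> = (\<Prod>i<n. [:- T $$ (i,i), 1:])"
    unfolding diag_mat_def using T
    by (simp add: prod.distinct_set_conv_list[symmetric] atLeast0LessThan o_def)
  finally have "char_poly A = (\<Prod>i<n. [:- T $$ (i,i), 1:])" .
  moreover have "T $$ (i,i) = d i" if "i < m" for i using ent[of i i] that m by auto
  moreover have "mtr T = mtr A"
  proof -
    have "mtr T = mtr (S' * (A * S))" unfolding T_def using S S' A by (simp add: assoc_mult_mat[of _ n n _ n _ n])
    also have "\<dots> = mtr ((A * S) * S')" by (rule mtr_comm[of _ n n]) (use S S' A in auto)
    also have "\<dots> = mtr (A * (S * S'))" using S S' A by (simp add: assoc_mult_mat[of _ n n _ n _ n])
    also have "\<dots> = mtr A" using SS2 A by simp
    finally show ?thesis .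
  qed
  ultimately show ?thesis using that T by blast
qed

lemma prod_linear_inj:
  fixes M M' :: "real multiset"
  assumes "(\<Prod>x\<in>#M. [:- x, 1:]) = (\<Prod>x\<in>#M'. [:- x, 1:])"
  shows "M = M'"
  using assms
proof (induction M arbitrary: M')
  case empty
  show ?case
  proof (rule ccontr)
    assume "{#} \<noteq> M'"
    then obtain y where "y \<in># M'" by (metis multiset_nonemptyE)
    then have "poly (\<Prod>x\<in>#M'. [:- x, 1:]) y = 0" by (auto simp: poly_prod_mset)
    with empty show False by simp
  qed
next
  case (add x M)
  have "poly (\<Prod>x\<in>#add_mset x M. [:- x, 1:]) x = 0" by simp
  then have "poly (\<Prod>x\<in>#M'. [:- x, 1:]) x = 0" using add.prems by metis
  then have "x \<in># M'" by (force simp: poly_prod_mset)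
  then obtain M2 where M2: "M' = add_mset x M2" by (metis mset_add)
  then have "[:- x, 1:] * (\<Prod>x\<in>#M. [:- x, 1:]) = [:- x, 1:] * (\<Prod>x\<in>#M2. [:- x, 1:])"
    using add.prems by simp
  moreover have "[:- x, 1:] \<noteq> (0::real poly)" by simp
  ultimately have "(\<Prod>x\<in>#M. [:- x, 1:]) = (\<Prod>x\<in>#M2. [:- x, 1:])"
    using mult_left_cancel by blast
  from add.IH[OF this] M2 show ?case by simp
qed

lemma eigvals_eq:
  assumes "char_poly A = (\<Prod>x\<in>#M. [:- x, 1:])"
  shows "eigvals A = M"
proof -
  have "char_poly A = (\<Prod>x\<in>#eigvals A. [:- x, 1:])"
    unfolding eigvals_def by (rule someI[where x = M]) (rule assms)
  with assms show ?thesis using prod_linear_inj by metis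
qed

lemma eigvals_fun:
  assumes "char_poly A = (\<Prod>i<n. [:- d i, 1:])"
  shows "(\<Sum>e\<in>#eigvals A. f e) = (\<Sum>i<n. f (d i))"
proof -
  have "char_poly A = (\<Prod>x\<in>#image_mset d (mset_set {..<n}). [:- x, 1:])"
    using assms by (simp add: prod_unfold_prod_mset image_mset.compositionality o_def)
  then have "eigvals A = image_mset d (mset_set {..<n})" by (rule eigvals_eq)
  then show ?thesis by (simp add: sum_unfold_sum_mset image_mset.compositionality o_def)
qed

definition Sb :: "nat \<Rightarrow> real mat" where
  "Sb N = mat N N (\<lambda>(i,j). if j = 0 then 1 else if j = N - 1 then (if i = N - 1 then 1 else 0)
        else (if i = j then 1 else if i = j + 1 then -1 else 0))"

lemma sum_delta2:
  fixes g :: "nat \<Rightarrow> real"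
  assumes "j + 1 < N"
  shows "(\<Sum>k<N. g k * (if k = j then 1 else if k = j + 1 then -1 else 0)) = g j - g (j+1)"
proof -
  have "(\<Sum>k<N. g k * (if k = j then 1 else if k = j + 1 then -1 else 0))
      = (\<Sum>k<N. (if k = j then g k else 0)) - (\<Sum>k<N. (if k = j + 1 then g k else 0))"
    by (subst sum_subtractf[symmetric], rule sum.cong) auto
  also have "\<dots> = g j - g (j+1)" using assms by simp
  finally show ?thesis .
qed

lemma char_poly_KS:
  fixes A :: "real mat"
  assumes A: "A \<in> carrier_mat N N" and N: "2 \<le> N"
    and H1: "\<And>i. i < N \<Longrightarrow> (\<Sum>k<N. A $$ (i,k)) = 1"
    and H2: "\<And>i j. 1 \<le> j \<Longrightarrow> j + 1 < N \<Longrightarrow> i < N \<Longrightarrow>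
        A $$ (i,j) - A $$ (i,j+1) = lam * (if i = j then 1 else if i = j + 1 then -1 else 0)"
    and tr: "mtr A = 1 + real (N - 2) * lam + t"
  shows "char_poly A = (\<Prod>i<N. [:- (if i = 0 then 1 else if i = N - 1 then t else lam), 1:])"
proof -
  define d where "d = (\<lambda>i::nat. if i = 0 then 1 else if i = N - 1 then t else lam)"
  have S: "Sb N \<in> carrier_mat N N" by (simp add: Sb_def)
  have "det (Sb N) = prod_list (diag_mat (Sb N))"
    by (rule det_lower_triangular[OF _ S]) (auto simp: Sb_def)
  also have "\<dots> = 1" unfolding diag_mat_def Sb_def
    by (rule prod_list_neutral) auto
  finally have dS: "det (Sb N) \<noteq> 0" by simp
  have ev: "A *\<^sub>v col (Sb N) j = d j \<cdot>\<^sub>v col (Sb N) j" if j: "j < N - 1" for j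
  proof (rule eq_vecI)
    fix i assume "i < dim_vec (d j \<cdot>\<^sub>v col (Sb N) j)"
    then have i: "i < N" by (simp add: Sb_def)
    have "(A *\<^sub>v col (Sb N) j) $ i = (\<Sum>k<N. A $$ (i,k) * Sb N $$ (k,j))"
      using A i j by (simp add: scalar_prod_def atLeast0LessThan Sb_def)
    also have "\<dots> = d j * Sb N $$ (i,j)"
    proof (cases "j = 0")
      case True
      then have "(\<Sum>k<N. A $$ (i,k) * Sb N $$ (k,j)) = (\<Sum>k<N. A $$ (i,k))"
        by (intro sum.cong) (auto simp: Sb_def)
      then show ?thesis using H1[OF i] True i by (simp add: d_def Sb_def)
    next
      case False
      then have "(\<Sum>k<N. A $$ (i,k) * Sb N $$ (k,j))
          = (\<Sum>k<N. A $$ (i,k) * (if k = j then 1 else if k = j + 1 then -1 else 0))"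
        using j by (intro sum.cong) (auto simp: Sb_def)
      also have "\<dots> = A $$ (i,j) - A $$ (i,j+1)" using j by (intro sum_delta2) auto
      also have "\<dots> = lam * (if i = j then 1 else if i = j + 1 then -1 else 0)"
        using H2[of j i] False j i by auto
      finally show ?thesis using False j i by (simp add: d_def Sb_def)
    qed
    finally show "(A *\<^sub>v col (Sb N) j) $ i = (d j \<cdot>\<^sub>v col (Sb N) j) $ i"
      using i j by (simp add: Sb_def)
  qed (use A in \<open>simp add: Sb_def\<close>)
  obtain T where T: "T \<in> carrier_mat N N" and cp: "char_poly A = (\<Prod>i<N. [:- T $$ (i,i), 1:])"
    and Td: "\<And>i. i < N - 1 \<Longrightarrow> T $$ (i,i) = d i" and Ttr: "mtr T = mtr A"
    using char_poly_eigbasis[OF A S dS ev, of "N - 1"] by auto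
  have "mtr T = (\<Sum>i<N - 1. T $$ (i,i)) + T $$ (N-1, N-1)"
  proof -
    have e: "{..<N} = insert (N - 1) {..<N - 1}" using N by auto
    have "mtr T = (\<Sum>i<N. T $$ (i,i))" using T unfolding mtr_def by simp
    also have "\<dots> = (\<Sum>i\<in>insert (N - 1) {..<N - 1}. T $$ (i,i))" by (simp only: e)
    also have "\<dots> = T $$ (N-1,N-1) + (\<Sum>i<N - 1. T $$ (i,i))" by (rule sum.insert) auto
    finally show ?thesis by (simp add: add.commute)
  qed
  moreover have "(\<Sum>i<N - 1. T $$ (i,i)) = (\<Sum>i<N - 1. d i)" by (intro sum.cong) (auto simp: Td)
  moreover have "(\<Sum>i<N - 1. d i) = 1 + real (N - 2) * lam"
  proof -
    have "{..<N-1} = insert 0 {1..<N-1}" using N by auto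
    then have "(\<Sum>i<N - 1. d i) = d 0 + (\<Sum>i\<in>{1..<N-1}. d i)" by simp
    also have "(\<Sum>i\<in>{1..<N-1}. d i) = (\<Sum>i\<in>{1..<N-1}. lam)" by (intro sum.cong) (auto simp: d_def)
    finally show ?thesis using N by (simp add: d_def)
  qed
  ultimately have Tl: "T $$ (N-1, N-1) = t" using Ttr tr by simp
  have "T $$ (i,i) = d i" if "i < N" for i
  proof (cases "i < N - 1")
    case True then show ?thesis by (rule Td)
  next
    case False then have "i = N - 1" using that by linarith
    then show ?thesis using Tl N by (simp add: d_def)
  qed
  then show ?thesis unfolding cp d_def by (intro prod.cong) auto
qed

lemma sum_if_eq:
  fixes a b :: real
  assumes "i < N"
  shows "(\<Sum>k<N. if i = k then a else b) = a + real (N - 1) * b"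
proof -
  have "(\<Sum>k<N. if i = k then a else b) = (\<Sum>k<N. b + (if k = i then a - b else 0))"
    by (intro sum.cong) auto
  also have "\<dots> = real N * b + (a - b)" using assms by (simp add: sum.distrib)
  finally show ?thesis using assms by (simp add: of_nat_diff algebra_simps)
qed

lemma lap_carrier: "laplacian N adj \<in> carrier_mat N N"
  unfolding laplacian_def by (rule mat_carrier)

lemma lap_dims[simp]: "dim_row (laplacian N adj) = N" "dim_col (laplacian N adj) = N"
  using lap_carrier[of N adj] by auto

lemma P_carrier: "1\<^sub>m N - c \<cdot>\<^sub>m laplacian N adj \<in> carrier_mat N N"
  by (rule minus_carrier_mat) (use lap_carrier in auto)

lemma lap_entry:
  assumes "i < N" "j < N"
  shows "(1\<^sub>m N - c \<cdot>\<^sub>m laplacian N adj) $$ (i,j) = (if i = j then 1 else 0) -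
     c * ((if i = j then real (card {k. k < N \<and> adj i k}) else 0) - (if adj i j then 1 else 0))"
  using assms by (simp add: laplacian_def)

lemma PK_entry:
  assumes "i < N" "j < N"
  shows "(1\<^sub>m N - c \<cdot>\<^sub>m L_K N) $$ (i,j) = (if i = j then 1 - c * real (N - 1) else c)"
proof -
  have "{k. k < N \<and> complete_adj N i k} = {..<N} - {i}" by (auto simp: complete_adj_def)
  then have "real (card {k. k < N \<and> complete_adj N i k}) = real N - 1" using assms by (simp add: of_nat_diff)
  then show ?thesis using assms by (cases "i = j") (simp_all add: laplacian_def complete_adj_def of_nat_diff)
qed

lemma PS_entry:
  assumes "i < N" "j < N"
  shows "(1\<^sub>m N - c \<cdot>\<^sub>m L_S N) $$ (i,j) = (if i = j then (if i = 0 then 1 - c * real (N - 1) else 1 - c)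
     else if i = 0 \<or> j = 0 then c else 0)"
proof -
  have "card {k. k < N \<and> star_adj N i k} = (if i = 0 then N - 1 else 1)"
  proof (cases "i = 0")
    case True
    then have "{k. k < N \<and> star_adj N i k} = {..<N} - {0}" by (auto simp: star_adj_def)
    then show ?thesis using assms True by simp
  next
    case False
    then have "{k. k < N \<and> star_adj N i k} = {0}" using assms by (auto simp: star_adj_def)
    then show ?thesis using False by simp
  qed
  then have cs: "real (card {k. k < N \<and> star_adj N i k}) = (if i = 0 then real N - 1 else 1)"
    using assms by (simp add: of_nat_diff)
  show ?thesis unfolding lap_entry[OF assms] cs using assms by (simp add: star_adj_def of_nat_diff)
qed

lemma char_poly_PK:
  assumes N: "2 \<le> N"
  shows "char_poly (1\<^sub>m N - c \<cdot>\<^sub>m L_K N) = (\<Prod>i<N. [:- (if i = 0 then 1 else 1 - c * real N), 1:])"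
proof -
  let ?A = "1\<^sub>m N - c \<cdot>\<^sub>m L_K N"
  have A: "?A \<in> carrier_mat N N" by (rule P_carrier)
  have cp: "char_poly ?A = (\<Prod>i<N. [:- (if i = 0 then 1 else if i = N - 1 then 1 - c * real N else 1 - c * real N), 1:])"
  proof (rule char_poly_KS[OF A N])
    fix i assume i: "i < N"
    have "(\<Sum>k<N. ?A $$ (i,k)) = (\<Sum>k<N. if i = k then 1 - c * real (N - 1) else c)"
      by (intro sum.cong refl PK_entry) (use i in auto)
    also have "\<dots> = 1" using i by (simp add: sum_if_eq)
    finally show "(\<Sum>k<N. ?A $$ (i,k)) = 1" .
  next
    fix i j assume "1 \<le> j" "j + 1 < N" "i < N"
    note ij = this
    have e1: "?A $$ (i,j) = (if i = j then 1 - c * real (N - 1) else c)"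
      by (rule PK_entry) (use ij in auto)
    have e2: "?A $$ (i,j+1) = (if i = j + 1 then 1 - c * real (N - 1) else c)"
      by (rule PK_entry) (use ij in auto)
    have rN: "real (N - 1) = real N - 1" using N by (simp add: of_nat_diff)
    show "?A $$ (i,j) - ?A $$ (i,j+1) = (1 - c * real N) * (if i = j then 1 else if i = j + 1 then -1 else 0)"
      unfolding e1 e2 rN by (simp add: algebra_simps)
  next
    have "mtr ?A = (\<Sum>i<N. 1 - c * real (N - 1))" unfolding mtr_def
    proof (rule sum.cong)
      show "{..<dim_row ?A} = {..<N}" using A by simp
      fix x assume "x \<in> {..<N}"
      then show "?A $$ (x,x) = 1 - c * real (N - 1)" using PK_entry[of x N x c] by simp
    qed
    then show "mtr ?A = 1 + real (N - 2) * (1 - c * real N) + (1 - c * real N)"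
      using N by (simp add: of_nat_diff algebra_simps)
  qed
  then show ?thesis by (simp only: if_cancel)
qed

lemma char_poly_PS:
  assumes N: "2 \<le> N"
  shows "char_poly (1\<^sub>m N - c \<cdot>\<^sub>m L_S N) =
    (\<Prod>i<N. [:- (if i = 0 then 1 else if i = N - 1 then 1 - c * real N else 1 - c), 1:])"
proof -
  let ?A = "1\<^sub>m N - c \<cdot>\<^sub>m L_S N"
  have A: "?A \<in> carrier_mat N N" by (rule P_carrier)
  have rN: "real (N - 1) = real N - 1" using N by (simp add: of_nat_diff)
  show ?thesis
  proof (rule char_poly_KS[OF A N])
    fix i assume i: "i < N"
    show "(\<Sum>k<N. ?A $$ (i,k)) = 1"
    proof (cases "i = 0")
      case True
      have "(\<Sum>k<N. ?A $$ (i,k)) = (\<Sum>k<N. if i = k then 1 - c * real (N - 1) else c)"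
      proof (rule sum.cong)
        fix x assume "x \<in> {..<N}"
        then show "?A $$ (i,x) = (if i = x then 1 - c * real (N - 1) else c)"
          using PS_entry[of i N x c] i True by simp
      qed simp
      also have "\<dots> = 1" using i by (simp add: sum_if_eq rN algebra_simps)
      finally show ?thesis .
    next
      case False
      have "(\<Sum>k<N. ?A $$ (i,k)) = (\<Sum>k<N. (if k = i then 1 - c else 0) + (if k = 0 then c else 0))"
      proof (rule sum.cong)
        fix x assume "x \<in> {..<N}"
        then show "?A $$ (i,x) = (if x = i then 1 - c else 0) + (if x = 0 then c else 0)"
          using PS_entry[of i N x c] i False by auto
      qed simp
      also have "\<dots> = 1" using i N by (simp add: sum.distrib)
      finally show ?thesis .
    qed
  next
    fix i j assume ij: "1 \<le> j" "j + 1 < N" "i < N"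
    have e1: "?A $$ (i,j) = (if i = j then 1 - c else if i = 0 then c else 0)"
      using PS_entry[of i N j c] ij by simp
    have e2: "?A $$ (i,j+1) = (if i = j + 1 then 1 - c else if i = 0 then c else 0)"
      using PS_entry[of i N "j+1" c] ij by simp
    show "?A $$ (i,j) - ?A $$ (i,j+1) = (1 - c) * (if i = j then 1 else if i = j + 1 then -1 else 0)"
      unfolding e1 e2 using ij by auto
  next
    have "mtr ?A = (\<Sum>i<N. if 0 = i then 1 - c * real (N - 1) else 1 - c)" unfolding mtr_def
    proof (rule sum.cong)
      show "{..<dim_row ?A} = {..<N}" using A by simp
      fix x assume "x \<in> {..<N}"
      then show "?A $$ (x,x) = (if 0 = x then 1 - c * real (N - 1) else 1 - c)"
        using PS_entry[of x N x c] by auto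
    qed
    also have "\<dots> = 1 - c * real (N - 1) + real (N - 1) * (1 - c)" by (rule sum_if_eq) (use N in simp)
    finally show "mtr ?A = 1 + real (N - 2) * (1 - c) + (1 - c * real N)"
      using N by (simp add: of_nat_diff algebra_simps)
  qed
qed

lemma P_dim: "dim_row (1\<^sub>m N - c \<cdot>\<^sub>m laplacian N adj) = N"
  using P_carrier[of N c adj] by simp

lemma sum_split3:
  fixes f :: "nat \<Rightarrow> real"
  assumes "2 \<le> N"
  shows "(\<Sum>i<N. f i) = f 0 + f (N - 1) + (\<Sum>i\<in>{1..<N-1}. f i)"
proof -
  have "{..<N} = insert 0 (insert (N - 1) {1..<N-1})" using assms by auto
  then show ?thesis using assms by simp
qed

lemma part_a:
  fixes a \<alpha> \<sigma>r2 \<sigma>w2 :: real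
  assumes "\<bar>a\<bar> * (1 - \<alpha>) < 1"
  shows "(\<lambda>N. MSD_hat a \<alpha> \<sigma>r2 \<sigma>w2 (1\<^sub>m N - ((1 - \<alpha>) / real N) \<cdot>\<^sub>m L_K N))
        \<longlonglongrightarrow> R_MSD a \<alpha> \<sigma>r2 + a^2 * \<alpha>^2 * \<sigma>w2"
proof -
  define C where "C = a^2 * \<alpha>^2 * \<sigma>w2"
  define g where "g = (\<lambda>e. a^2 * \<alpha>^2 * \<sigma>w2 / (1 - a^2 * (e - \<alpha>)^2))"
  have eq: "MSD_hat a \<alpha> \<sigma>r2 \<sigma>w2 (1\<^sub>m N - ((1 - \<alpha>) / real N) \<cdot>\<^sub>m L_K N)
      = R_MSD a \<alpha> \<sigma>r2 + C + (g 1 - C) / real N" if N: "2 \<le> N" for N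
  proof -
    have cN: "1 - (1 - \<alpha>) / real N * real N = \<alpha>" using N by simp
    have "(\<Sum>e\<in>#eigvals (1\<^sub>m N - ((1 - \<alpha>) / real N) \<cdot>\<^sub>m L_K N). g e)
        = (\<Sum>i<N. g (if i = 0 then 1 else \<alpha>))"
      using eigvals_fun[OF char_poly_PK[OF N, of "(1 - \<alpha>) / real N"], of g] unfolding cN .
    also have "\<dots> = (\<Sum>i<N. if 0 = i then g 1 else C)"
      by (intro sum.cong) (auto simp: g_def C_def)
    also have "\<dots> = g 1 + real (N - 1) * C" by (rule sum_if_eq) (use N in simp)
    finally have s: "(\<Sum>e\<in>#eigvals (1\<^sub>m N - ((1 - \<alpha>) / real N) \<cdot>\<^sub>m L_K N). g e) = g 1 + real (N - 1) * C" .
    show ?thesis unfolding MSD_hat_def P_dim g_def[symmetric] s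
      using N by (simp add: of_nat_diff field_simps)
  qed
  have "(\<lambda>N. R_MSD a \<alpha> \<sigma>r2 + C + (g 1 - C) / real N) \<longlonglongrightarrow> R_MSD a \<alpha> \<sigma>r2 + C + 0"
    by (intro tendsto_intros)
  then have "(\<lambda>N. R_MSD a \<alpha> \<sigma>r2 + C + (g 1 - C) / real N) \<longlonglongrightarrow> R_MSD a \<alpha> \<sigma>r2 + C" by simp
  then show ?thesis unfolding C_def[symmetric]
    by (rule Lim_transform_eventually) (use eq in \<open>auto simp: eventually_sequentially intro!: exI[of _ 2]\<close>)
qed

lemma part_d:
  fixes a \<alpha> \<sigma>r2 \<sigma>w2 :: real
  shows "(\<lambda>N. MSD_tilde a \<alpha> \<sigma>r2 \<sigma>w2 (1\<^sub>m N - (1 / real N) \<cdot>\<^sub>m L_K N))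
        \<longlonglongrightarrow> R_MSD a \<alpha> \<sigma>r2"
proof -
  define h where "h = (\<lambda>e. a^2 * \<alpha>^2 * \<sigma>w2 * e^2 / (1 - a^2 * (e - \<alpha>)^2))"
  have eq: "MSD_tilde a \<alpha> \<sigma>r2 \<sigma>w2 (1\<^sub>m N - (1 / real N) \<cdot>\<^sub>m L_K N)
      = R_MSD a \<alpha> \<sigma>r2 + h 1 / real N" if N: "2 \<le> N" for N
  proof -
    have cN: "1 - 1 / real N * real N = 0" using N by simp
    have "(\<Sum>e\<in>#eigvals (1\<^sub>m N - (1 / real N) \<cdot>\<^sub>m L_K N). h e)
        = (\<Sum>i<N. h (if i = 0 then 1 else 0))"
      using eigvals_fun[OF char_poly_PK[OF N, of "1 / real N"], of h] unfolding cN .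
    also have "\<dots> = (\<Sum>i<N. if 0 = i then h 1 else 0)"
      by (intro sum.cong) (auto simp: h_def)
    also have "\<dots> = h 1 + real (N - 1) * 0" by (rule sum_if_eq) (use N in simp)
    finally have s: "(\<Sum>e\<in>#eigvals (1\<^sub>m N - (1 / real N) \<cdot>\<^sub>m L_K N). h e) = h 1" by simp
    show ?thesis unfolding MSD_tilde_def P_dim h_def[symmetric] s
      using N by simp
  qed
  have "(\<lambda>N. R_MSD a \<alpha> \<sigma>r2 + h 1 / real N) \<longlonglongrightarrow> R_MSD a \<alpha> \<sigma>r2 + 0"
    by (intro tendsto_intros)
  then have "(\<lambda>N. R_MSD a \<alpha> \<sigma>r2 + h 1 / real N) \<longlonglongrightarrow> R_MSD a \<alpha> \<sigma>r2" by simp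
  then show ?thesis
    by (rule Lim_transform_eventually) (use eq in \<open>auto simp: eventually_sequentially intro!: exI[of _ 2]\<close>)
qed

lemma part_b:
  fixes a \<alpha> \<sigma>r2 \<sigma>w2 :: real
  assumes "\<bar>a\<bar> * (1 - \<alpha>) < 1" "\<alpha> \<le> 1"
  shows "(\<lambda>N. MSD_hat a \<alpha> \<sigma>r2 \<sigma>w2 (1\<^sub>m N - ((1 - \<alpha>) / real N) \<cdot>\<^sub>m L_S N))
        \<longlonglongrightarrow> R_MSD a \<alpha> \<sigma>r2 + a^2 * \<alpha>^2 * \<sigma>w2 / (1 - a^2 * (1 - \<alpha>)^2)"
proof -
  define C where "C = a^2 * \<alpha>^2 * \<sigma>w2"
  define g where "g = (\<lambda>e. a^2 * \<alpha>^2 * \<sigma>w2 / (1 - a^2 * (e - \<alpha>)^2))"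
  have eq: "MSD_hat a \<alpha> \<sigma>r2 \<sigma>w2 (1\<^sub>m N - ((1 - \<alpha>) / real N) \<cdot>\<^sub>m L_S N)
      = R_MSD a \<alpha> \<sigma>r2 + (g 1 + C) / real N + (1 - 2 / real N) * g (1 - (1 - \<alpha>) / real N)"
    if N: "2 \<le> N" for N
  proof -
    have cN: "1 - (1 - \<alpha>) / real N * real N = \<alpha>" using N by simp
    have "(\<Sum>e\<in>#eigvals (1\<^sub>m N - ((1 - \<alpha>) / real N) \<cdot>\<^sub>m L_S N). g e)
        = (\<Sum>i<N. g (if i = 0 then 1 else if i = N - 1 then \<alpha> else 1 - (1 - \<alpha>) / real N))"
      using eigvals_fun[OF char_poly_PS[OF N, of "(1 - \<alpha>) / real N"], of g] unfolding cN .
    also have "\<dots> = g 1 + g \<alpha> + (\<Sum>i\<in>{1..<N-1}. g (1 - (1 - \<alpha>) / real N))"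
      using N by (subst sum_split3[OF N]) (auto intro!: sum.cong)
    also have "\<dots> = g 1 + C + real (N - 2) * g (1 - (1 - \<alpha>) / real N)"
      by (simp add: g_def C_def numeral_2_eq_2)
    finally have s: "(\<Sum>e\<in>#eigvals (1\<^sub>m N - ((1 - \<alpha>) / real N) \<cdot>\<^sub>m L_S N). g e)
       = g 1 + C + real (N - 2) * g (1 - (1 - \<alpha>) / real N)" .
    show ?thesis unfolding MSD_hat_def P_dim g_def[symmetric] s
      using N by (simp add: of_nat_diff field_simps)
  qed
  have den: "1 - a^2 * (1 - \<alpha>)^2 \<noteq> 0"
  proof -
    have "0 \<le> \<bar>a\<bar> * (1 - \<alpha>)" using assms by simp
    then have "(\<bar>a\<bar> * (1 - \<alpha>))^2 < 1" using assms(1) by (simp add: power_less_one_iff abs_square_less_1)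
    then show ?thesis by (simp add: power_mult_distrib)
  qed
  have l1: "(\<lambda>N. 1 - (1 - \<alpha>) / real N) \<longlonglongrightarrow> 1"
    using tendsto_diff[OF tendsto_const[of 1] lim_const_over_n[of "1 - \<alpha>"]] by simp
  have l2: "(\<lambda>N. g (1 - (1 - \<alpha>) / real N)) \<longlonglongrightarrow> g 1"
    unfolding g_def by (intro tendsto_intros l1) (use den in simp)
  have "(\<lambda>N. R_MSD a \<alpha> \<sigma>r2 + (g 1 + C) / real N + (1 - 2 / real N) * g (1 - (1 - \<alpha>) / real N))
      \<longlonglongrightarrow> R_MSD a \<alpha> \<sigma>r2 + 0 + (1 - 0) * g 1"
    by (intro tendsto_intros l2)
  then have "(\<lambda>N. R_MSD a \<alpha> \<sigma>r2 + (g 1 + C) / real N + (1 - 2 / real N) * g (1 - (1 - \<alpha>) / real N))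
      \<longlonglongrightarrow> R_MSD a \<alpha> \<sigma>r2 + a^2 * \<alpha>^2 * \<sigma>w2 / (1 - a^2 * (1 - \<alpha>)^2)" by (simp add: g_def)
  then show ?thesis
    by (rule Lim_transform_eventually) (use eq in \<open>auto simp: eventually_sequentially intro!: exI[of _ 2]\<close>)
qed

definition E :: "nat \<Rightarrow> nat \<Rightarrow> complex" where
  "E N m = cis (2 * pi * real m / real N)"

lemma E_add: "E N (a + b) = E N a * E N b"
  unfolding E_def by (simp add: cis_mult add_divide_distrib distrib_left)

lemma E_mult_N: "0 < N \<Longrightarrow> E N (N * q) = 1"
proof -
  assume N: "0 < N"
  have "2 * pi * real (N * q) / real N = 2 * pi * real q" using N by simp
  then show ?thesis unfolding E_def by simp
qed

lemma E_mod: "0 < N \<Longrightarrow> E N (m mod N) = E N m"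
proof -
  assume N: "0 < N"
  have "E N m = E N (m mod N + N * (m div N))" by simp
  also have "\<dots> = E N (m mod N)" using N by (simp only: E_add E_mult_N) simp
  finally show ?thesis by simp
qed

lemma E_pow: "E N (m * j) = E N m ^ j"
  unfolding E_def by (subst Complex.DeMoivre) (simp add: field_simps)

lemma E_one: assumes N: "0 < N" and e: "E N m = 1" shows "N dvd m"
proof -
  from e have "cos (2 * pi * real m / real N) = 1"
    unfolding E_def by (metis cis.sel(1) one_complex.sel(1))
  then obtain n :: int where n: "2 * pi * real m / real N = real_of_int n * 2 * pi"
    using iffD1[OF cos_one_2pi_int] by blast
  then have "real m = real_of_int n * real N" using N by (simp add: field_simps)
  then have "int m = n * int N" by (metis of_int_eq_iff of_int_mult of_int_of_nat_eq)
  then have "int N dvd int m" by simp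
  then show ?thesis by simp
qed

lemma E_cos: assumes N: "0 < N"
  shows "E N k + E N ((N - 1) * k) = complex_of_real (2 * cos (2 * pi * real k / real N))"
proof -
  have "E N ((N - 1) * k) * E N k = 1"
    using N by (metis E_add E_mult_N add_mult_distrib Suc_pred' plus_1_eq_Suc mult_1 add.commute)
  then have "E N ((N - 1) * k) = cis (- (2 * pi * real k / real N))"
    unfolding E_def by (metis cis_inverse inverse_unique mult.commute)
  then show ?thesis unfolding E_def by (simp add: complex_eq_iff)
qed

lemma mod_succ: "(i::nat) < N \<Longrightarrow> (i + 1) mod N = (if i + 1 < N then i + 1 else 0)"
proof (cases "i + 1 < N")
  case False
  assume "i < N"
  then have "i + 1 = N" using False by simp
  then show ?thesis by simp
qed simp

lemma mod_pred: assumes "(i::nat) < N" shows "(i + N - 1) mod N = (if 1 \<le> i then i - 1 else N - 1)"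
proof (cases "1 \<le> i")
  case True
  then have e: "i + N - 1 = (i - 1) + N" by arith
  show ?thesis unfolding e mod_add_self2 using True assms by simp
next
  case False
  then show ?thesis using assms by simp
qed

lemma adj_iff:
  assumes "i < N" "k < N" "3 \<le> N"
  shows "cycle_adj N i k \<longleftrightarrow> (k = (i + 1) mod N \<or> k = (i + N - 1) mod N)"
  using assms unfolding cycle_adj_def mod_succ[OF assms(1)] mod_succ[OF assms(2)] mod_pred[OF assms(1)]
  by auto

lemma cyc_neq:
  assumes "(i::nat) < N" "3 \<le> N"
  shows "(i + 1) mod N \<noteq> i" "(i + N - 1) mod N \<noteq> i" "(i + 1) mod N \<noteq> (i + N - 1) mod N"
    "(i + 1) mod N < N" "(i + N - 1) mod N < N"
  using assms unfolding mod_succ[OF assms(1)] mod_pred[OF assms(1)] by auto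

lemma cyc_card:
  assumes "i < N" "3 \<le> N"
  shows "card {k. k < N \<and> cycle_adj N i k} = 2"
proof -
  have "{k. k < N \<and> cycle_adj N i k} = {(i + 1) mod N, (i + N - 1) mod N}"
    using adj_iff[OF assms(1) _ assms(2)] cyc_neq[OF assms] by auto
  then show ?thesis using cyc_neq[OF assms] by simp
qed

lemma PC_entry:
  assumes "i < N" "j < N" "3 \<le> N"
  shows "(1\<^sub>m N - \<beta> \<cdot>\<^sub>m L_C N) $$ (i,j) = (if j = i then 1 - 2 * \<beta> else 0)
     + (if j = (i + 1) mod N then \<beta> else 0) + (if j = (i + N - 1) mod N then \<beta> else 0)"
  unfolding lap_entry[OF assms(1,2)] cyc_card[OF assms(1,3)] adj_iff[OF assms]
  using cyc_neq[OF assms(1,3)] by auto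

definition DS :: "nat \<Rightarrow> complex mat" where "DS N = mat N N (\<lambda>(j,k). E N (j * k))"
definition DS' :: "nat \<Rightarrow> complex mat" where "DS' N = mat N N (\<lambda>(j,l). E N ((N - 1) * j * l))"

lemma dvd_eq:
  assumes "0 < N" "(i::nat) < N" "l < N" "N dvd (i + (N - 1) * l)"
  shows "i = l"
proof -
  obtain q where q: "i + (N - 1) * l = N * q" using assms(4) by (auto elim: dvdE)
  have "(N - 1) * l + l = N * l" using assms(1) by (cases N) auto
  then have "i + N * l = N * q + l" using q by (metis add.assoc)
  then have "(i + N * l) mod N = (N * q + l) mod N" by simp
  then show ?thesis using assms by simp
qed

lemma DS_inv:
  assumes N: "0 < N"
  shows "DS N * DS' N = of_nat N \<cdot>\<^sub>m 1\<^sub>m N"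
proof (rule eq_matI)
  fix i l assume i: "i < dim_row (of_nat N \<cdot>\<^sub>m 1\<^sub>m N :: complex mat)" and l: "l < dim_col (of_nat N \<cdot>\<^sub>m 1\<^sub>m N :: complex mat)"
  then have i: "i < N" and l: "l < N" by auto
  define z where "z = E N (i + (N - 1) * l)"
  have "(DS N * DS' N) $$ (i,l) = (\<Sum>j<N. E N (i * j) * E N ((N - 1) * j * l))"
    using i l by (simp add: DS_def DS'_def scalar_prod_def atLeast0LessThan)
  also have "\<dots> = (\<Sum>j<N. z ^ j)"
  proof (rule sum.cong)
    fix j assume "j \<in> {..<N}"
    have "E N (i * j) * E N ((N - 1) * j * l) = E N ((i + (N - 1) * l) * j)"
      by (simp add: E_add[symmetric] algebra_simps)
    then show "E N (i * j) * E N ((N - 1) * j * l) = z ^ j" by (simp add: z_def E_pow)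
  qed simp
  also have "\<dots> = (of_nat N \<cdot>\<^sub>m 1\<^sub>m N) $$ (i,l)"
  proof (cases "i = l")
    case True
    have "i + (N - 1) * l = N * i" using True N by (cases N) auto
    then have "z = 1" using N by (simp add: z_def E_mult_N)
    then show ?thesis using True i by (simp add: sum_gp_strict)
  next
    case False
    have "z \<noteq> 1" using E_one[OF N, of "i + (N - 1) * l"] dvd_eq[OF N i l] False by (auto simp: z_def)
    moreover have "z ^ N = 1" unfolding z_def E_pow[symmetric] using N by (metis E_mult_N mult.commute)
    ultimately show ?thesis using False i l by (simp add: sum_gp_strict)
  qed
  finally show "(DS N * DS' N) $$ (i,l) = (of_nat N \<cdot>\<^sub>m 1\<^sub>m N) $$ (i,l)" .
qed (auto simp: DS_def DS'_def)

lemma DS_det: assumes N: "0 < N" shows "det (DS N) \<noteq> 0"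
proof -
  have "det (DS N) * det (DS' N) = det (of_nat N \<cdot>\<^sub>m 1\<^sub>m N :: complex mat)"
    by (subst DS_inv[OF N, symmetric], rule det_mult[symmetric]) (auto simp: DS_def DS'_def)
  also have "\<dots> = of_nat N ^ N" by simp
  also have "\<dots> \<noteq> 0" using N by simp
  finally show ?thesis by auto
qed

lemma sd:
  assumes "(a::nat) < N"
  shows "(\<Sum>j<N. (if j = a then u else 0) * (x j :: complex)) = u * x a"
proof -
  have "(\<Sum>j<N. (if j = a then u else 0) * x j) = (\<Sum>j<N. if j = a then u * x a else 0)"
    by (intro sum.cong) auto
  also have "\<dots> = u * x a" using assms by (subst sum.delta) auto
  finally show ?thesis .
qed

lemma E_modmul: "0 < N \<Longrightarrow> E N ((m mod N) * k) = E N (m * k)"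
  by (metis E_mod mod_mult_left_eq)

interpretation rp: map_poly_inj_idom_hom "of_real :: real \<Rightarrow> complex" ..

lemma char_poly_PC:
  assumes N: "3 \<le> N"
  shows "char_poly (1\<^sub>m N - \<beta> \<cdot>\<^sub>m L_C N) =
     (\<Prod>k<N. [:- (1 - \<beta> * (2 - 2 * cos (2 * pi * real k / real N))), 1:])"
proof -
  let ?P = "1\<^sub>m N - \<beta> \<cdot>\<^sub>m L_C N"
  define Ac where "Ac = map_mat complex_of_real ?P"
  define \<nu> where "\<nu> = (\<lambda>k. 1 - \<beta> * (2 - 2 * cos (2 * pi * real k / real N)))"
  have N0: "0 < N" using N by simp
  have P: "?P \<in> carrier_mat N N" by (rule P_carrier)
  have A: "Ac \<in> carrier_mat N N" using P by (simp add: Ac_def)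
  have S: "DS N \<in> carrier_mat N N" by (simp add: DS_def)
  have ev: "Ac *\<^sub>v col (DS N) k = complex_of_real (\<nu> k) \<cdot>\<^sub>v col (DS N) k" if k: "k < N" for k
  proof (rule eq_vecI)
    fix i assume "i < dim_vec (complex_of_real (\<nu> k) \<cdot>\<^sub>v col (DS N) k)"
    then have i: "i < N" by (simp add: DS_def)
    note nq = cyc_neq[OF i N]
    have "(Ac *\<^sub>v col (DS N) k) $ i = (\<Sum>j<N. Ac $$ (i,j) * E N (j * k))"
      using A i k by (simp add: scalar_prod_def atLeast0LessThan DS_def)
    also have "\<dots> = (\<Sum>j<N. ((if j = i then complex_of_real (1 - 2 * \<beta>) else 0)
        + (if j = (i + 1) mod N then complex_of_real \<beta> else 0)
        + (if j = (i + N - 1) mod N then complex_of_real \<beta> else 0)) * E N (j * k))"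
    proof (rule sum.cong)
      fix j assume "j \<in> {..<N}"
      then have j: "j < N" by simp
      have "Ac $$ (i,j) = complex_of_real (?P $$ (i,j))" using P i j by (simp add: Ac_def)
      also have "\<dots> = (if j = i then complex_of_real (1 - 2 * \<beta>) else 0)
        + (if j = (i + 1) mod N then complex_of_real \<beta> else 0)
        + (if j = (i + N - 1) mod N then complex_of_real \<beta> else 0)"
        unfolding PC_entry[OF i j N] by simp
      finally show "Ac $$ (i,j) * E N (j * k) = ((if j = i then complex_of_real (1 - 2 * \<beta>) else 0)
        + (if j = (i + 1) mod N then complex_of_real \<beta> else 0)
        + (if j = (i + N - 1) mod N then complex_of_real \<beta> else 0)) * E N (j * k)" by simp
    qed simp
    also have "\<dots> = complex_of_real (1 - 2 * \<beta>) * E N (i * k) + complex_of_real \<beta> * E N (((i + 1) mod N) * k)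
        + complex_of_real \<beta> * E N (((i + N - 1) mod N) * k)"
      using i nq by (simp add: distrib_right sum.distrib sd)
    also have "\<dots> = E N (i * k) * (complex_of_real (1 - 2 * \<beta>) + complex_of_real \<beta> * (E N k + E N ((N - 1) * k)))"
    proof -
      have "E N (((i + 1) mod N) * k) = E N ((i + 1) * k)" by (rule E_modmul[OF N0])
      also have "(i + 1) * k = i * k + k" by simp
      finally have e1: "E N (((i + 1) mod N) * k) = E N (i * k) * E N k" by (simp only: E_add)
      have "E N (((i + N - 1) mod N) * k) = E N ((i + N - 1) * k)" by (rule E_modmul[OF N0])
      also have "(i + N - 1) * k = i * k + (N - 1) * k" using N0 by (simp add: algebra_simps)
      finally have e2: "E N (((i + N - 1) mod N) * k) = E N (i * k) * E N ((N - 1) * k)" by (simp only: E_add)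
      show ?thesis unfolding e1 e2 by (simp add: algebra_simps)
    qed
    also have "\<dots> = complex_of_real (\<nu> k) * E N (i * k)"
      unfolding E_cos[OF N0] \<nu>_def by (simp add: algebra_simps)
    finally show "(Ac *\<^sub>v col (DS N) k) $ i = (complex_of_real (\<nu> k) \<cdot>\<^sub>v col (DS N) k) $ i"
      using i k by (simp add: DS_def)
  qed (use A in \<open>simp add: DS_def\<close>)
  obtain T where T: "T \<in> carrier_mat N N" and cp: "char_poly Ac = (\<Prod>i<N. [:- T $$ (i,i), 1:])"
    and Td: "\<And>i. i < N \<Longrightarrow> T $$ (i,i) = complex_of_real (\<nu> i)"
    using char_poly_eigbasis[OF A S DS_det[OF N0] ev, of N] by auto
  have "map_poly complex_of_real (char_poly ?P) = char_poly Ac"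
    unfolding Ac_def by (rule of_real_hom.char_poly_hom[symmetric, OF P])
  also have "\<dots> = (\<Prod>i<N. [:- complex_of_real (\<nu> i), 1:])" unfolding cp by (intro prod.cong) (auto simp: Td)
  also have "\<dots> = map_poly complex_of_real (\<Prod>i<N. [:- \<nu> i, 1:])"
    by (simp add: rp.hom_prod)
  finally have "map_poly complex_of_real (char_poly ?P) = map_poly complex_of_real (\<Prod>i<N. [:- \<nu> i, 1:])" .
  then show ?thesis unfolding \<nu>_def by (rule rp.injectivity)
qed

lemma riemann_piece:
  fixes f :: "real \<Rightarrow> real"
  assumes cont: "continuous_on UNIV f" and ab: "a \<le> b"
    and B: "\<And>t. t \<in> {a..b} \<Longrightarrow> \<bar>f t - f a\<bar> \<le> B"
  shows "\<bar>integral {a..b} f - (b - a) * f a\<bar> \<le> B * (b - a)"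
proof -
  have ci: "continuous_on {a..b} f" using cont by (rule continuous_on_subset) simp
  have "integral {a..b} (\<lambda>t. f t - f a) = integral {a..b} f - integral {a..b} (\<lambda>t. f a)"
    by (rule integral_diff) (use ci in \<open>auto intro: integrable_continuous_real\<close>)
  also have "integral {a..b} (\<lambda>t. f a) = (b - a) * f a" using ab by simp
  finally have e: "integral {a..b} (\<lambda>t. f t - f a) = integral {a..b} f - (b - a) * f a" .
  have "norm (integral {a..b} (\<lambda>t. f t - f a)) \<le> B * (b - a)"
    by (rule integral_bound[OF ab]) (use ci B in \<open>auto intro!: continuous_intros\<close>)
  then show ?thesis unfolding e by simp
qed

lemma riemann:
  fixes f :: "real \<Rightarrow> real" and L :: real
  assumes cont: "continuous_on UNIV f" and L: "0 < L"
  shows "(\<lambda>N. L / real N * (\<Sum>k<N. f (L * real k / real N))) \<longlonglongrightarrow> integral {0..L} f"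
proof (rule LIMSEQ_I)
  fix r :: real assume r: "0 < r"
  have "uniformly_continuous_on {0..L} f"
    by (rule compact_uniformly_continuous) (use cont in \<open>auto intro: continuous_on_subset\<close>)
  then obtain d where d: "0 < d" and dd: "\<And>x y. x \<in> {0..L} \<Longrightarrow> y \<in> {0..L} \<Longrightarrow> dist y x < d \<Longrightarrow>
      dist (f y) (f x) < r / (2 * L)"
    unfolding uniformly_continuous_on_def using r L by (metis divide_pos_pos mult_pos_pos zero_less_numeral)
  obtain M :: nat where M: "L / d < real M" using reals_Archimedean2 by blast
  show "\<exists>no. \<forall>N\<ge>no. norm (L / real N * (\<Sum>k<N. f (L * real k / real N)) - integral {0..L} f) < r"
  proof (intro exI allI impI)
    fix N assume NM: "Suc M \<le> N"
    then have N: "0 < N" by simp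
    define h where "h = L / real N"
    define x where "x = (\<lambda>k::nat. L * real k / real N)"
    have h0: "0 < h" using L N by (simp add: h_def)
    have hd: "h < d"
    proof -
      have "L / d < real N" using M NM by linarith
      then have "L < d * real N" using d by (simp add: field_simps)
      then show ?thesis using N d by (simp add: h_def field_simps)
    qed
    have xs: "x (Suc k) = x k + h" for k by (simp add: x_def h_def distrib_left add_divide_distrib)
    have xin: "0 \<le> x k" "x k \<le> L" if "k \<le> N" for k
      using that L N by (auto simp: x_def field_simps)
    define G where "G = (\<lambda>t. integral {0..t} f)"
    have ci: "\<And>a b. f integrable_on {a..b}"
      by (rule integrable_continuous_real) (use cont in \<open>auto intro: continuous_on_subset\<close>)
    have step: "G (x (Suc k)) - G (x k) = integral {x k..x (Suc k)} f" if k: "k < N" for k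
    proof -
      have "integral {0..x k} f + integral {x k..x (Suc k)} f = integral {0..x (Suc k)} f"
        by (rule Henstock_Kurzweil_Integration.integral_combine) (use xin[of k] k xs h0 ci in auto)
      then show ?thesis by (simp add: G_def)
    qed
    have "integral {0..L} f = G (x N) - G (x 0)" using N by (simp add: G_def x_def)
    also have "\<dots> = (\<Sum>k<N. G (x (Suc k)) - G (x k))" by (rule sum_lessThan_telescope[symmetric])
    also have "\<dots> = (\<Sum>k<N. integral {x k..x (Suc k)} f)" by (intro sum.cong) (auto simp: step)
    finally have I: "integral {0..L} f = (\<Sum>k<N. integral {x k..x (Suc k)} f)" .
    have lhs: "L / real N * (\<Sum>k<N. f (L * real k / real N)) = (\<Sum>k<N. h * f (x k))"
      by (simp add: h_def x_def sum_distrib_left)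
    have piece: "\<bar>integral {x k..x (Suc k)} f - h * f (x k)\<bar> \<le> r / (2 * L) * h" if k: "k < N" for k
    proof -
      have "\<bar>integral {x k..x (Suc k)} f - (x (Suc k) - x k) * f (x k)\<bar> \<le> r / (2 * L) * (x (Suc k) - x k)"
      proof (rule riemann_piece[OF cont])
        show "x k \<le> x (Suc k)" using xs h0 by simp
        fix t assume t: "t \<in> {x k..x (Suc k)}"
        have "t \<in> {0..L}" using t xin[of k] xin[of "Suc k"] k by auto
        moreover have "x k \<in> {0..L}" using xin[of k] k by auto
        moreover have "dist t (x k) < d" using t xs hd by (auto simp: dist_real_def)
        ultimately have "dist (f t) (f (x k)) < r / (2 * L)" using dd[of "x k" t] by blast
        then show "\<bar>f t - f (x k)\<bar> \<le> r / (2 * L)" by (simp add: dist_real_def)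
      qed
      then show ?thesis using xs by simp
    qed
    have "\<bar>(\<Sum>k<N. h * f (x k)) - integral {0..L} f\<bar> = \<bar>\<Sum>k<N. (integral {x k..x (Suc k)} f - h * f (x k))\<bar>"
      unfolding I by (simp add: sum_subtractf abs_minus_commute)
    also have "\<dots> \<le> (\<Sum>k<N. \<bar>integral {x k..x (Suc k)} f - h * f (x k)\<bar>)" by (rule sum_abs)
    also have "\<dots> \<le> (\<Sum>k<N. r / (2 * L) * h)" by (intro sum_mono piece) simp
    also have "\<dots> = r / 2" using N L by (simp add: h_def field_simps)
    also have "\<dots> < r" using r by simp
    finally show "norm (L / real N * (\<Sum>k<N. f (L * real k / real N)) - integral {0..L} f) < r"
      unfolding lhs by simp
  qed
qed

lemma part_c:
  fixes a \<alpha> \<sigma>r2 \<sigma>w2 \<beta> :: real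
  assumes b0: "0 < \<beta>" and b1: "\<beta> < 1/2" and ab: "\<bar>a\<bar> * max (1 - \<alpha>) \<bar>1 - 4 * \<beta> - \<alpha>\<bar> < 1"
    and al: "\<alpha> \<le> 1"
  shows "(\<lambda>N. MSD_hat a \<alpha> \<sigma>r2 \<sigma>w2 (1\<^sub>m N - \<beta> \<cdot>\<^sub>m L_C N))
        \<longlonglongrightarrow> R_MSD a \<alpha> \<sigma>r2 +
            integral {0..2*pi} (\<lambda>\<tau>. a^2 * \<alpha>^2 * \<sigma>w2 /
               (1 - a^2 * (1 - \<beta> * (2 - 2 * cos \<tau>) - \<alpha>)^2)) / (2 * pi)"
proof -
  define g where "g = (\<lambda>\<tau>. a^2 * \<alpha>^2 * \<sigma>w2 / (1 - a^2 * (1 - \<beta> * (2 - 2 * cos \<tau>) - \<alpha>)^2))"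
  define G where "G = (\<lambda>e. a^2 * \<alpha>^2 * \<sigma>w2 / (1 - a^2 * (e - \<alpha>)^2))"
  have den: "1 - a^2 * (1 - \<beta> * (2 - 2 * cos \<tau>) - \<alpha>)^2 \<noteq> 0" for \<tau>
  proof -
    define y where "y = 1 - \<beta> * (2 - 2 * cos \<tau>) - \<alpha>"
    have c1: "0 \<le> 2 - 2 * cos \<tau>" "2 - 2 * cos \<tau> \<le> 4"
      using cos_le_one[of \<tau>] cos_ge_minus_one[of \<tau>] by linarith+
    have "\<bar>y\<bar> \<le> max (1 - \<alpha>) \<bar>1 - 4 * \<beta> - \<alpha>\<bar>"
    proof (cases "0 \<le> y")
      case True
      have "0 \<le> \<beta> * (2 - 2 * cos \<tau>)" by (rule mult_nonneg_nonneg) (use b0 c1 in auto)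
      then have "y \<le> 1 - \<alpha>" unfolding y_def by linarith
      then show ?thesis using True by simp
    next
      case False
      have "\<beta> * (2 - 2 * cos \<tau>) \<le> \<beta> * 4" by (rule mult_left_mono) (use c1 b0 in auto)
      then have "1 - 4 * \<beta> - \<alpha> \<le> y" unfolding y_def by linarith
      then show ?thesis using False by simp
    qed
    then have "\<bar>a\<bar> * \<bar>y\<bar> \<le> \<bar>a\<bar> * max (1 - \<alpha>) \<bar>1 - 4 * \<beta> - \<alpha>\<bar>" by (simp add: mult_left_mono)
    then have "\<bar>a * y\<bar> < 1" using ab by (simp add: abs_mult)
    then have "(a * y)^2 < 1" by (simp add: abs_square_less_1)
    then show ?thesis by (simp add: y_def power_mult_distrib)
  qed
  have cont: "continuous_on UNIV g" unfolding g_def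
    by (intro continuous_intros) (use den in auto)
  have eq: "MSD_hat a \<alpha> \<sigma>r2 \<sigma>w2 (1\<^sub>m N - \<beta> \<cdot>\<^sub>m L_C N)
      = R_MSD a \<alpha> \<sigma>r2 + (1 / (2 * pi)) * (2 * pi / real N * (\<Sum>k<N. g (2 * pi * real k / real N)))"
    if N: "3 \<le> N" for N
  proof -
    have "(\<Sum>e\<in>#eigvals (1\<^sub>m N - \<beta> \<cdot>\<^sub>m L_C N). G e) = (\<Sum>k<N. G (1 - \<beta> * (2 - 2 * cos (2 * pi * real k / real N))))"
      by (rule eigvals_fun[OF char_poly_PC[OF N]])
    also have "\<dots> = (\<Sum>k<N. g (2 * pi * real k / real N))" by (simp add: G_def g_def)
    finally have s: "(\<Sum>e\<in>#eigvals (1\<^sub>m N - \<beta> \<cdot>\<^sub>m L_C N). G e) = (\<Sum>k<N. g (2 * pi * real k / real N))" .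
    show ?thesis unfolding MSD_hat_def P_dim G_def[symmetric] s by simp
  qed
  have "(\<lambda>N. R_MSD a \<alpha> \<sigma>r2 + (1 / (2 * pi)) * (2 * pi / real N * (\<Sum>k<N. g (2 * pi * real k / real N))))
     \<longlonglongrightarrow> R_MSD a \<alpha> \<sigma>r2 + (1 / (2 * pi)) * integral {0..2*pi} g"
    by (intro tendsto_intros riemann cont) simp
  then have "(\<lambda>N. R_MSD a \<alpha> \<sigma>r2 + (1 / (2 * pi)) * (2 * pi / real N * (\<Sum>k<N. g (2 * pi * real k / real N))))
     \<longlonglongrightarrow> R_MSD a \<alpha> \<sigma>r2 + integral {0..2*pi} g / (2 * pi)" by simp
  then show ?thesis unfolding g_def[symmetric]
    by (rule Lim_transform_eventually) (use eq in \<open>auto simp: eventually_sequentially intro!: exI[of _ 3]\<close>)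
qed

theorem corollary1:
  fixes a \<alpha> \<sigma>r2 \<sigma>w2 :: real
  assumes "0 < \<alpha>" and "\<alpha> \<le> 1" and "0 \<le> \<sigma>r2" and "0 \<le> \<sigma>w2"
  shows
   "(\<bar>a\<bar> * (1 - \<alpha>) < 1 \<longrightarrow>
      (\<lambda>N. MSD_hat a \<alpha> \<sigma>r2 \<sigma>w2 (1\<^sub>m N - ((1 - \<alpha>) / real N) \<cdot>\<^sub>m L_K N))
        \<longlonglongrightarrow> R_MSD a \<alpha> \<sigma>r2 + a^2 * \<alpha>^2 * \<sigma>w2)
  \<and> (\<bar>a\<bar> * (1 - \<alpha>) < 1 \<longrightarrow>
      (\<lambda>N. MSD_hat a \<alpha> \<sigma>r2 \<sigma>w2 (1\<^sub>m N - ((1 - \<alpha>) / real N) \<cdot>\<^sub>m L_S N))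
        \<longlonglongrightarrow> R_MSD a \<alpha> \<sigma>r2 + a^2 * \<alpha>^2 * \<sigma>w2 / (1 - a^2 * (1 - \<alpha>)^2))
  \<and> (\<forall>\<beta>::real. 0 < \<beta> \<and> \<beta> < 1/2 \<and> \<bar>a\<bar> * max (1 - \<alpha>) \<bar>1 - 4 * \<beta> - \<alpha>\<bar> < 1 \<longrightarrow>
      (\<lambda>N. MSD_hat a \<alpha> \<sigma>r2 \<sigma>w2 (1\<^sub>m N - \<beta> \<cdot>\<^sub>m L_C N))
        \<longlonglongrightarrow> R_MSD a \<alpha> \<sigma>r2 +
            integral {0..2*pi} (\<lambda>\<tau>. a^2 * \<alpha>^2 * \<sigma>w2 /
               (1 - a^2 * (1 - \<beta> * (2 - 2 * cos \<tau>) - \<alpha>)^2)) / (2 * pi))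
  \<and> (\<bar>a\<bar> * max (1 - \<alpha>) \<alpha> < 1 \<longrightarrow>
      (\<lambda>N. MSD_tilde a \<alpha> \<sigma>r2 \<sigma>w2 (1\<^sub>m N - (1 / real N) \<cdot>\<^sub>m L_K N))
        \<longlonglongrightarrow> R_MSD a \<alpha> \<sigma>r2)"
  using part_a part_b[OF _ assms(2)] part_c[OF _ _ _ assms(2)] part_d by blast
end
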